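(* Let $\mathcal{X},\mathcal{Y}$ be finite alphabets and $P_{XY}$ a joint PMF on $\mathcal{X}\times\mathcal{Y}$ with $P_X$ fully supported on $\mathcal{X}$. Let $(X^N,Y^N)\sim P_{XY}^{\otimes N}$, let $M\in\mathbb{N}$, $\beta>0$, $L=\beta\log M$ and $N=ML$ (integer constraints ignored). Split $X^N$ into the $M$ consecutive non-overlapping fragments $\boldsymbol{X}(i)=X_{(i-1)L+1}^{iL}$, $i\in[M]$. Let $\hat{X}^N$ be a maximum-likelihood reconstruction, i.e. $\hat X^N\in\arg\max_{\tilde X^N\in\mathcal{A}_L(X^N)}\mathbb{P}[Y^N\mid \tilde X^N]$, where $\mathcal{A}_L(X^N)=\{(\boldsymbol{X}(\pi(1)),\ldots,\boldsymbol{X}(\pi(M))):\pi\in S_M\}$, with fragments $\hat{\boldsymbol{X}}(i)=\hat X_{(i-1)L+1}^{iL}$. Let $\Xi=\frac1M\sum_{i\in[M]}\mathbb{1}\{\hat{\boldsymbol{X}}(i)\neq\boldsymbol{X}(i)\}$ and $\mathsf{FP}(\xi)=\mathbb{P}[\Xi\geq\xi,\ \hat X^N\neq X^N]$ for $\xi\in[0,1)$. Define $$\psi_2(P_{XY})=\min_{Q_{X_1X_2}\in\mathcal{P}(\mathcal{X}^2)}\Big\{\tfrac12 D_{\mathrm{KL}}(Q_{X_1X_2}\,\|\,P_X^{\otimes 2})+d_{P_{Y|X}}(Q_{X_1X_2})\Big\}.$$ If $\beta>1/\psi_2(P_{XY})$, then as $M\to\infty$: (i) $\mathsf{FP}(0)=O\big(M^{2[1-\beta\psi_2(P_{XY})]}\big)$,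 with a constant depending on $P_{XY}$; (ii) for every $\xi\in(0,1)$, $\mathsf{FP}(\xi)\leq\exp\!\Big[-M\log M\cdot\xi\big(\beta\psi_2(P_{XY})-1-O(1/M)\big)\Big]$.
   Context: For $x_1,x_2\in\mathcal{X}$ the Bhattacharyya distance is $d_{P_{Y|X}}(x_1,x_2)=-\log\sum_{y\in\mathcal{Y}}\sqrt{P_{Y|X}(y|x_1)P_{Y|X}(y|x_2)}$, and for a joint PMF $Q_{X_1X_2}$ on $\mathcal{X}^2$, $d_{P_{Y|X}}(Q_{X_1X_2})=\sum_{x_1,x_2}Q_{X_1X_2}(x_1,x_2)\,d_{P_{Y|X}}(x_1,x_2)$. $\mathcal{P}(\mathcal{X}^2)$ is the probability simplex on $\mathcal{X}^2$, $S_M$ the symmetric group on $[M]=\{1,\dots,M\}$, and logarithms are natural. *)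

theory Defs
  imports Complex_Main "HOL-Library.Extended_Real" "HOL-Library.FuncSet"
    "HOL-Combinatorics.Permutations"
begin

definition PX :: "('x::finite \<Rightarrow> 'y::finite \<Rightarrow> real) \<Rightarrow> 'x \<Rightarrow> real" where
  "PX p x = (\<Sum>y\<in>UNIV. p x y)"

definition chan :: "('x::finite \<Rightarrow> 'y::finite \<Rightarrow> real) \<Rightarrow> 'x \<Rightarrow> 'y \<Rightarrow> real" where
  "chan p x y = p x y / PX p x"

definition is_joint_pmf :: "('x::finite \<Rightarrow> 'y::finite \<Rightarrow> real) \<Rightarrow> bool" where
  "is_joint_pmf p \<longleftrightarrow> (\<forall>x y. 0 \<le> p x y) \<and> (\<Sum>x\<in>UNIV. \<Sum>y\<in>UNIV. p x y) = 1"

definition bhat_coeff :: "('x::finite \<Rightarrow> 'y::finite \<Rightarrow> real) \<Rightarrow> 'x \<Rightarrow> 'x \<Rightarrow> real" where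
  "bhat_coeff p x1 x2 = (\<Sum>y\<in>UNIV. sqrt (chan p x1 y * chan p x2 y))"

definition bhat_dist :: "('x::finite \<Rightarrow> 'y::finite \<Rightarrow> real) \<Rightarrow> 'x \<Rightarrow> 'x \<Rightarrow> ereal" where
  "bhat_dist p x1 x2 =
     (if bhat_coeff p x1 x2 = 0 then \<infinity> else ereal (- ln (bhat_coeff p x1 x2)))"

definition bhat_dist_joint :: "('x::finite \<Rightarrow> 'y::finite \<Rightarrow> real) \<Rightarrow> ('x \<times> 'x \<Rightarrow> real) \<Rightarrow> ereal" where
  "bhat_dist_joint p Q = (\<Sum>z\<in>UNIV. ereal (Q z) * bhat_dist p (fst z) (snd z))"

definition simplex2 :: "('x::finite \<times> 'x \<Rightarrow> real) set" where
  "simplex2 = {Q. (\<forall>z. 0 \<le> Q z) \<and> (\<Sum>z\<in>UNIV. Q z) = 1}"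

definition KL2 :: "('x::finite \<times> 'x \<Rightarrow> real) \<Rightarrow> ('x \<Rightarrow> real) \<Rightarrow> real" where
  "KL2 Q P = (\<Sum>z\<in>UNIV. if Q z = 0 then 0 else Q z * ln (Q z / (P (fst z) * P (snd z))))"

definition psi2 :: "('x::finite \<Rightarrow> 'y::finite \<Rightarrow> real) \<Rightarrow> ereal" where
  "psi2 p = (INF Q\<in>simplex2. ereal (KL2 Q (PX p) / 2) + bhat_dist_joint p Q)"

definition frag_len :: "real \<Rightarrow> nat \<Rightarrow> nat" where
  "frag_len \<beta> M = nat \<lceil>\<beta> * ln (real M)\<rceil>"

definition seqs :: "nat \<Rightarrow> (nat \<Rightarrow> 'a) set" where
  "seqs N = PiE {..<N} (\<lambda>_. UNIV)"

text \<open>(X(pi(1)),...,X(pi(M))) with 0-based fragment indices.\<close>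
definition rearr :: "nat \<Rightarrow> nat \<Rightarrow> (nat \<Rightarrow> nat) \<Rightarrow> (nat \<Rightarrow> 'a) \<Rightarrow> nat \<Rightarrow> 'a" where
  "rearr M L \<sigma> xs k = (if k < M * L then xs (\<sigma> (k div L) * L + k mod L) else undefined)"

definition recon_set :: "nat \<Rightarrow> nat \<Rightarrow> (nat \<Rightarrow> 'a) \<Rightarrow> (nat \<Rightarrow> 'a) set" where
  "recon_set M L xs = {rearr M L \<sigma> xs | \<sigma>. \<sigma> permutes {..<M}}"

definition likelihood :: "('x::finite \<Rightarrow> 'y::finite \<Rightarrow> real) \<Rightarrow> nat \<Rightarrow> (nat \<Rightarrow> 'x) \<Rightarrow> (nat \<Rightarrow> 'y) \<Rightarrow> real" where
  "likelihood p N x ys = (\<Prod>k<N. chan p (x k) (ys k))"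

definition is_ML :: "('x::finite \<Rightarrow> 'y::finite \<Rightarrow> real) \<Rightarrow> nat \<Rightarrow> nat \<Rightarrow> (nat \<Rightarrow> 'x) \<Rightarrow> (nat \<Rightarrow> 'y) \<Rightarrow> (nat \<Rightarrow> 'x) \<Rightarrow> bool" where
  "is_ML p M L xs ys xhat \<longleftrightarrow> xhat \<in> recon_set M L xs \<and>
     (\<forall>x'\<in>recon_set M L xs. likelihood p (M * L) x' ys \<le> likelihood p (M * L) xhat ys)"

definition prob_iid :: "('x::finite \<Rightarrow> 'y::finite \<Rightarrow> real) \<Rightarrow> nat \<Rightarrow> ((nat \<Rightarrow> 'x) \<Rightarrow> (nat \<Rightarrow> 'y) \<Rightarrow> bool) \<Rightarrow> real" where
  "prob_iid p N E = (\<Sum>xs\<in>seqs N. \<Sum>ys\<in>seqs N.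
      if E xs ys then (\<Prod>k<N. p (xs k) (ys k)) else 0)"

definition Xi :: "nat \<Rightarrow> nat \<Rightarrow> (nat \<Rightarrow> 'x) \<Rightarrow> (nat \<Rightarrow> 'x) \<Rightarrow> real" where
  "Xi M L xs xhat = (1 / real M) *
     (\<Sum>i<M. if (\<exists>j<L. xhat (i * L + j) \<noteq> xs (i * L + j)) then 1 else 0)"

definition FP :: "('x::finite \<Rightarrow> 'y::finite \<Rightarrow> real) \<Rightarrow> real
     \<Rightarrow> (nat \<Rightarrow> (nat \<Rightarrow> 'x) \<Rightarrow> (nat \<Rightarrow> 'y) \<Rightarrow> (nat \<Rightarrow> 'x)) \<Rightarrow> nat \<Rightarrow> real \<Rightarrow> real" where
  "FP p \<beta> dec M \<xi> =
     (let L = frag_len \<beta> M; N = M * L in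
      prob_iid p N (\<lambda>xs ys. let xhat = dec M xs ys in
         Xi M L xs xhat \<ge> \<xi> \<and> (\<exists>k<N. xhat k \<noteq> xs k)))"

end

theory Submission
  imports Defs "HOL-Analysis.Convex"
begin

definition Tsum :: "'i set \<Rightarrow> ('i \<Rightarrow> 'i) \<Rightarrow> ('i \<Rightarrow> 'x::finite \<Rightarrow> 'x \<Rightarrow> real) \<Rightarrow> real" where
  "Tsum I \<pi> A = (\<Sum>x\<in>PiE I (\<lambda>_. UNIV). \<Prod>i\<in>I. A i (x (\<pi> i)) (x i))"

definition frob :: "('x::finite \<Rightarrow> 'x \<Rightarrow> real) \<Rightarrow> real" where
  "frob A = sqrt (\<Sum>u\<in>UNIV. \<Sum>v\<in>UNIV. (A u v)\<^sup>2)"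

definition trc :: "('x::finite \<Rightarrow> 'x \<Rightarrow> real) \<Rightarrow> real" where
  "trc A = (\<Sum>u\<in>UNIV. A u u)"

definition mmul :: "('x::finite \<Rightarrow> 'x \<Rightarrow> real) \<Rightarrow> ('x \<Rightarrow> 'x \<Rightarrow> real) \<Rightarrow> 'x \<Rightarrow> 'x \<Rightarrow> real" where
  "mmul A B u w = (\<Sum>v\<in>UNIV. A u v * B v w)"

lemma frob_nonneg: "0 \<le> frob A"
  unfolding frob_def by (simp add: sum_nonneg)

lemma trc_mmul_le: "trc (mmul A B) \<le> frob A * frob B"
proof -
  have e: "trc (mmul A B) = (\<Sum>z\<in>UNIV. A (fst z) (snd z) * B (snd z) (fst z))"
    unfolding trc_def mmul_def by (simp add: sum.cartesian_product' UNIV_Times_UNIV[symmetric] del: UNIV_Times_UNIV)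
  have fa: "(\<Sum>u\<in>UNIV. \<Sum>v\<in>UNIV. (A u v)\<^sup>2) = (\<Sum>z\<in>UNIV. (A (fst z) (snd z))\<^sup>2)"
    by (simp add: sum.cartesian_product' UNIV_Times_UNIV[symmetric] del: UNIV_Times_UNIV)
  have "(\<Sum>u\<in>UNIV. \<Sum>v\<in>UNIV. (B u v)\<^sup>2) = (\<Sum>v\<in>UNIV. \<Sum>u\<in>UNIV. (B u v)\<^sup>2)"
    by (rule sum.swap)
  also have "\<dots> = (\<Sum>z\<in>UNIV. (B (snd z) (fst z))\<^sup>2)"
    by (simp add: sum.cartesian_product' UNIV_Times_UNIV[symmetric] del: UNIV_Times_UNIV)
  finally have fb: "(\<Sum>u\<in>UNIV. \<Sum>v\<in>UNIV. (B u v)\<^sup>2) = (\<Sum>z\<in>UNIV. (B (snd z) (fst z))\<^sup>2)" .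
  have "(trc (mmul A B))\<^sup>2 \<le> (frob A)\<^sup>2 * (frob B)\<^sup>2"
    unfolding e frob_def fa fb by (simp add: sum_nonneg Cauchy_Schwarz_ineq_sum)
  hence "(trc (mmul A B))\<^sup>2 \<le> (frob A * frob B)\<^sup>2" by (simp add: power_mult_distrib)
  thus ?thesis using frob_nonneg[of A] frob_nonneg[of B]
    by (meson mult_nonneg_nonneg real_le_rsqrt real_sqrt_le_iff abs_le_square_iff abs_ge_self order_trans power2_le_imp_le)
qed

lemma frob_mmul_le: "frob (mmul A B) \<le> frob A * frob B"
proof -
  have "(\<Sum>u\<in>UNIV. \<Sum>w\<in>UNIV. (mmul A B u w)\<^sup>2) \<le> (\<Sum>u\<in>UNIV. \<Sum>w\<in>UNIV. (\<Sum>v\<in>UNIV. (A u v)\<^sup>2) * (\<Sum>v\<in>UNIV. (B v w)\<^sup>2))"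
    unfolding mmul_def by (intro sum_mono Cauchy_Schwarz_ineq_sum)
  also have "\<dots> = (\<Sum>u\<in>UNIV. \<Sum>v\<in>UNIV. (A u v)\<^sup>2) * (\<Sum>w\<in>UNIV. \<Sum>v\<in>UNIV. (B v w)\<^sup>2)"
    by (rule sum_product[symmetric])
  also have "\<dots> = (\<Sum>u\<in>UNIV. \<Sum>v\<in>UNIV. (A u v)\<^sup>2) * (\<Sum>u\<in>UNIV. \<Sum>v\<in>UNIV. (B u v)\<^sup>2)"
    using sum.swap[of "\<lambda>w v. (B v w)\<^sup>2" UNIV UNIV] by simp
  finally have "frob (mmul A B) \<le> sqrt ((\<Sum>u\<in>UNIV. \<Sum>v\<in>UNIV. (A u v)\<^sup>2) * (\<Sum>u\<in>UNIV. \<Sum>v\<in>UNIV. (B u v)\<^sup>2))"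
    unfolding frob_def by simp
  thus ?thesis by (simp add: frob_def real_sqrt_mult)
qed

lemma sum_PiE_insert:
  assumes "m \<notin> I"
  shows "(\<Sum>x\<in>PiE (insert m I) (\<lambda>_. UNIV::'x::finite set). f x) =
         (\<Sum>v\<in>UNIV. \<Sum>g\<in>PiE I (\<lambda>_. UNIV). f (g(m:=v)))"
proof -
  have "(\<Sum>x\<in>PiE (insert m I) (\<lambda>_. UNIV::'x set). f x) =
        (\<Sum>z\<in>UNIV \<times> PiE I (\<lambda>_. UNIV). f ((\<lambda>(y, g). g(m := y)) z))"
    unfolding PiE_insert_eq
    by (subst sum.reindex) (use inj_combinator[OF assms, of "\<lambda>_. UNIV::'x set"] in auto)
  also have "\<dots> = (\<Sum>v\<in>UNIV. \<Sum>g\<in>PiE I (\<lambda>_. UNIV). f (g(m:=v)))"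
    by (simp add: sum.cartesian_product split_def)
  finally show ?thesis .
qed

lemma trc_nonneg: "(\<forall>u v. 0 \<le> A u v) \<Longrightarrow> 0 \<le> trc A"
  unfolding trc_def by (simp add: sum_nonneg)

lemma Tsum_le:
  assumes "finite I" "\<pi> permutes I" "\<forall>i u v. 0 \<le> A i u v"
  shows "Tsum I \<pi> A \<le> (\<Prod>i\<in>I. if \<pi> i = i then trc (A i) else frob (A i))"
  using assms
proof (induction I arbitrary: \<pi> A rule: finite_induct)
  case empty
  then show ?case by (simp add: Tsum_def PiE_empty_domain)
next
  case (insert m I)
  have w_nonneg: "\<And>i \<sigma>. 0 \<le> (if \<sigma> i = i then trc (A i) else frob (A i))"
    using insert.prems(2) by (simp add: trc_nonneg frob_nonneg)
  have inimg: "\<And>i. i \<in> insert m I \<Longrightarrow> \<pi> i \<in> insert m I"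
    using insert.prems(1) by (meson permutes_in_image)
  have expand: "Tsum (insert m I) \<pi> A = (\<Sum>v\<in>UNIV. \<Sum>g\<in>PiE I (\<lambda>_. UNIV).
      \<Prod>i\<in>insert m I. A i ((g(m:=v)) (\<pi> i)) ((g(m:=v)) i))"
    unfolding Tsum_def by (rule sum_PiE_insert[OF insert.hyps(2)])
  show ?case
  proof (cases "\<pi> m = m")
    case True
    have pI: "\<pi> permutes I"
      using permutes_insert_lemma[OF insert.prems(1)] True by simp
    have inI: "\<And>i. i \<in> I \<Longrightarrow> \<pi> i \<in> I \<and> \<pi> i \<noteq> m"
      using pI insert.hyps(2) by (auto simp: permutes_in_image)
    have "Tsum (insert m I) \<pi> A = (\<Sum>v\<in>UNIV. \<Sum>g\<in>PiE I (\<lambda>_. UNIV).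
      A m v v * (\<Prod>i\<in>I. A i (g (\<pi> i)) (g i)))"
      unfolding expand
    proof (intro sum.cong refl)
      fix v g
      have "(\<Prod>i\<in>I. A i ((g(m:=v)) (\<pi> i)) ((g(m:=v)) i)) = (\<Prod>i\<in>I. A i (g (\<pi> i)) (g i))"
        using inI insert.hyps(2) by (intro prod.cong) auto
      then show "(\<Prod>i\<in>insert m I. A i ((g(m:=v)) (\<pi> i)) ((g(m:=v)) i)) =
          A m v v * (\<Prod>i\<in>I. A i (g (\<pi> i)) (g i))"
        using insert.hyps True by simp
    qed
    also have "\<dots> = trc (A m) * Tsum I \<pi> A"
      unfolding Tsum_def trc_def by (simp add: sum_product)
    also have "\<dots> \<le> trc (A m) * (\<Prod>i\<in>I. if \<pi> i = i then trc (A i) else frob (A i))"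
      using insert.IH[OF pI insert.prems(2)] trc_nonneg[of "A m"] insert.prems(2)
      by (intro mult_left_mono) auto
    also have "\<dots> = (\<Prod>i\<in>insert m I. if \<pi> i = i then trc (A i) else frob (A i))"
      using insert.hyps True by simp
    finally show ?thesis .
  next
    case False
    define b where "b = \<pi> m"
    obtain a where a: "\<pi> a = m"
      using permutes_inverses(1)[OF insert.prems(1)] by blast
    have am: "a \<noteq> m" using a False by auto
    have aI: "a \<in> I"
    proof (rule ccontr)
      assume "a \<notin> I"
      then have "a \<notin> insert m I" using am by simp
      then have "\<pi> a = a" using insert.prems(1) by (simp add: permutes_not_in)
      then show False using a am by simp
    qed
    have bI: "b \<in> I" using inimg[of m] False b_def by simp
    have injp: "inj \<pi>" using insert.prems(1) by (simp add: permutes_inj)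
    define \<pi>' where "\<pi>' = transpose m b \<circ> \<pi>"
    have p': "\<pi>' permutes I"
      unfolding \<pi>'_def b_def using permutes_insert_lemma[OF insert.prems(1)] .
    have p'a: "\<pi>' a = b" unfolding \<pi>'_def using a by simp
    have p'i: "\<And>i. i \<in> I \<Longrightarrow> i \<noteq> a \<Longrightarrow> \<pi>' i = \<pi> i \<and> \<pi> i \<noteq> m"
    proof -
      fix i assume i: "i \<in> I" "i \<noteq> a"
      have "\<pi> i \<noteq> m" using a i injp by (metis injD)
      moreover have "\<pi> i \<noteq> b" using i insert.hyps(2) injp b_def by (metis injD)
      ultimately show "\<pi>' i = \<pi> i \<and> \<pi> i \<noteq> m" unfolding \<pi>'_def by simp
    qed
    define A' where "A' = A(a := mmul (A m) (A a))"
    have A'nn: "\<forall>i u v. 0 \<le> A' i u v"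
      using insert.prems(2) by (simp add: A'_def mmul_def sum_nonneg)
    have Ia: "I = insert a (I - {a})" using aI by auto
    have "Tsum (insert m I) \<pi> A = (\<Sum>g\<in>PiE I (\<lambda>_. UNIV). \<Sum>v\<in>UNIV.
      \<Prod>i\<in>insert m I. A i ((g(m:=v)) (\<pi> i)) ((g(m:=v)) i))"
      unfolding expand by (rule sum.swap)
    also have "\<dots> = Tsum I \<pi>' A'"
      unfolding Tsum_def
    proof (rule sum.cong[OF refl])
      fix g assume g: "g \<in> PiE I (\<lambda>_. UNIV::'b set)"
      have R: "\<And>v. (\<Prod>i\<in>I - {a}. A i ((g(m:=v)) (\<pi> i)) ((g(m:=v)) i)) = (\<Prod>i\<in>I - {a}. A i (g (\<pi> i)) (g i))"
        using p'i insert.hyps(2) by (intro prod.cong) auto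
      have R': "(\<Prod>i\<in>I - {a}. A' i (g (\<pi>' i)) (g i)) = (\<Prod>i\<in>I - {a}. A i (g (\<pi> i)) (g i))"
        using p'i by (intro prod.cong) (auto simp: A'_def)
      have "(\<Prod>i\<in>insert m I. A i ((g(m:=v)) (\<pi> i)) ((g(m:=v)) i)) =
          (A m (g b) v * A a v (g a)) * (\<Prod>i\<in>I - {a}. A i (g (\<pi> i)) (g i))" for v
      proof -
        have "(\<Prod>i\<in>insert m I. A i ((g(m:=v)) (\<pi> i)) ((g(m:=v)) i)) =
          A m ((g(m:=v)) b) v * (A a v ((g(m:=v)) a) * (\<Prod>i\<in>I - {a}. A i ((g(m:=v)) (\<pi> i)) ((g(m:=v)) i)))"
        proof -
          let ?F = "\<lambda>i. A i ((g(m:=v)) (\<pi> i)) ((g(m:=v)) i)"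
          have "prod ?F (insert m I) = ?F m * prod ?F I" using insert.hyps(1,2) by simp
          also have "prod ?F I = ?F a * prod ?F (I - {a})" by (rule prod.remove[OF insert.hyps(1) aI])
          finally show ?thesis using a b_def am by simp
        qed
        also have "\<dots> = (A m (g b) v * A a v (g a)) * (\<Prod>i\<in>I - {a}. A i (g (\<pi> i)) (g i))"
          using R bI am insert.hyps(2) by auto
        finally show ?thesis .
      qed
      then have "(\<Sum>v\<in>UNIV. \<Prod>i\<in>insert m I. A i ((g(m:=v)) (\<pi> i)) ((g(m:=v)) i)) =
          mmul (A m) (A a) (g b) (g a) * (\<Prod>i\<in>I - {a}. A i (g (\<pi> i)) (g i))"
        by (simp add: mmul_def sum_distrib_right)
      also have "\<dots> = (\<Prod>i\<in>I. A' i (g (\<pi>' i)) (g i))"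
        using R' p'a prod.remove[OF insert.hyps(1) aI, of "\<lambda>i. A' i (g (\<pi>' i)) (g i)"]
        by (simp add: A'_def)
      finally show "(\<Sum>v\<in>UNIV. \<Prod>i\<in>insert m I. A i ((g(m:=v)) (\<pi> i)) ((g(m:=v)) i)) =
          (\<Prod>i\<in>I. A' i (g (\<pi>' i)) (g i))" .
    qed
    also have "\<dots> \<le> (\<Prod>i\<in>I. if \<pi>' i = i then trc (A' i) else frob (A' i))"
      by (rule insert.IH[OF p' A'nn])
    also have "\<dots> = (if \<pi>' a = a then trc (A' a) else frob (A' a)) *
        (\<Prod>i\<in>I - {a}. if \<pi> i = i then trc (A i) else frob (A i))"
    proof -
      have "(\<Prod>i\<in>I - {a}. if \<pi>' i = i then trc (A' i) else frob (A' i)) =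
            (\<Prod>i\<in>I - {a}. if \<pi> i = i then trc (A i) else frob (A i))"
        using p'i by (intro prod.cong) (auto simp: A'_def)
      then show ?thesis
        using prod.remove[OF insert.hyps(1) aI, of "\<lambda>i. if \<pi>' i = i then trc (A' i) else frob (A' i)"]
        by simp
    qed
    also have "\<dots> \<le> (frob (A m) * frob (A a)) *
        (\<Prod>i\<in>I - {a}. if \<pi> i = i then trc (A i) else frob (A i))"
    proof (rule mult_right_mono)
      show "0 \<le> (\<Prod>i\<in>I - {a}. if \<pi> i = i then trc (A i) else frob (A i))"
        using w_nonneg by (simp add: prod_nonneg)
      show "(if \<pi>' a = a then trc (A' a) else frob (A' a)) \<le> frob (A m) * frob (A a)"
        by (simp add: A'_def trc_mmul_le frob_mmul_le)
    qed
    also have "\<dots> = (\<Prod>i\<in>insert m I. if \<pi> i = i then trc (A i) else frob (A i))"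
      using insert.hyps False a am prod.remove[OF insert.hyps(1) aI, of "\<lambda>i. if \<pi> i = i then trc (A i) else frob (A i)"]
      by simp
    finally show ?thesis .
  qed
qed



lemma sqrt_prod: "sqrt (prod f A) = (\<Prod>x\<in>A. sqrt (f x))"
  by (induct A rule: infinite_finite_induct) (auto simp: real_sqrt_mult)

locale jp =
  fixes p :: "'x::finite \<Rightarrow> 'y::finite \<Rightarrow> real"
  assumes pmf: "is_joint_pmf p"
    and full_support: "\<forall>x. PX p x > 0"
begin

lemma p_nonneg: "0 \<le> p x y" using pmf by (simp add: is_joint_pmf_def)
lemma P_pos: "0 < PX p x" using full_support by simp
lemma P_sum: "(\<Sum>x\<in>UNIV. PX p x) = 1" using pmf by (simp add: is_joint_pmf_def PX_def)
lemma p_eq: "p x y = PX p x * chan p x y"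
  using P_pos[of x] by (simp add: chan_def)
lemma W_nonneg: "0 \<le> chan p x y"
  using P_pos[of x] p_nonneg[of x y] by (simp add: chan_def)
lemma W_sum: "(\<Sum>y\<in>UNIV. chan p x y) = 1"
  using P_pos[of x] by (simp add: chan_def PX_def sum_divide_distrib[symmetric])
lemma B_nonneg: "0 \<le> bhat_coeff p u v"
  unfolding bhat_coeff_def by (intro sum_nonneg real_sqrt_ge_zero mult_nonneg_nonneg W_nonneg)
lemma B_diag: "bhat_coeff p u u = 1"
  using W_sum[of u] W_nonneg by (simp add: bhat_coeff_def)

definition Zc :: real where
  "Zc = (\<Sum>u\<in>UNIV. \<Sum>v\<in>UNIV. PX p u * PX p v * (bhat_coeff p u v)\<^sup>2)"

lemma Zc_pos: "0 < Zc"
proof -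
  obtain u :: 'x where True by blast
  have "0 < PX p u * PX p u * (bhat_coeff p u u)\<^sup>2" using P_pos[of u] by (simp add: B_diag)
  also have "\<dots> \<le> (\<Sum>v\<in>UNIV. PX p u * PX p v * (bhat_coeff p u v)\<^sup>2)"
    by (rule member_le_sum) (auto intro!: mult_nonneg_nonneg less_imp_le[OF P_pos])
  also have "\<dots> \<le> Zc" unfolding Zc_def
    by (rule member_le_sum) (auto intro!: sum_nonneg mult_nonneg_nonneg less_imp_le[OF P_pos])
  finally show ?thesis .
qed

definition Qs :: "'x \<times> 'x \<Rightarrow> real" where
  "Qs z = PX p (fst z) * PX p (snd z) * (bhat_coeff p (fst z) (snd z))\<^sup>2 / Zc"

lemma Qs_simplex: "Qs \<in> simplex2"
proof -
  have "(\<Sum>z\<in>UNIV. Qs z) = (\<Sum>u\<in>UNIV. \<Sum>v\<in>UNIV. Qs (u, v))"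
    by (simp add: sum.cartesian_product' UNIV_Times_UNIV[symmetric] del: UNIV_Times_UNIV)
  also have "\<dots> = Zc / Zc"
    by (simp only: Qs_def fst_conv snd_conv sum_divide_distrib[symmetric]) (unfold Zc_def, rule refl)
  finally show ?thesis using Zc_pos
    by (auto simp: simplex2_def Qs_def intro!: divide_nonneg_pos mult_nonneg_nonneg less_imp_le[OF P_pos])
qed

lemma Qs_zero_iff: "Qs z = 0 \<longleftrightarrow> bhat_coeff p (fst z) (snd z) = 0"
  using Zc_pos P_pos[of "fst z"] P_pos[of "snd z"] by (simp add: Qs_def)

lemma psi2_le: "psi2 p \<le> ereal (- ln Zc / 2)"
proof -
  define g where "g z = (if bhat_coeff p (fst z) (snd z) = 0 then 0 else Qs z * (- ln (bhat_coeff p (fst z) (snd z))))" for z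
  have bd: "bhat_dist_joint p Qs = ereal (\<Sum>z\<in>UNIV. g z)"
    unfolding bhat_dist_joint_def sum_ereal[symmetric]
    by (intro sum.cong refl) (auto simp: g_def bhat_dist_def Qs_zero_iff)
  have trm: "(if Qs z = 0 then 0 else Qs z * ln (Qs z / (PX p (fst z) * PX p (snd z)))) / 2 + g z
      = - Qs z * ln Zc / 2" for z
  proof (cases "bhat_coeff p (fst z) (snd z) = 0")
    case True then show ?thesis by (simp add: Qs_zero_iff g_def Qs_def)
  next
    case False
    let ?b = "bhat_coeff p (fst z) (snd z)"
    have bp: "0 < ?b" using False B_nonneg by (simp add: order_less_le)
    have "Qs z / (PX p (fst z) * PX p (snd z)) = ?b\<^sup>2 / Zc"
      using P_pos[of "fst z"] P_pos[of "snd z"] by (simp add: Qs_def)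
    moreover have "ln (?b\<^sup>2 / Zc) = 2 * ln ?b - ln Zc"
      using bp Zc_pos by (simp add: ln_div ln_mult power2_eq_square)
    ultimately have L: "ln (Qs z / (PX p (fst z) * PX p (snd z))) = 2 * ln ?b - ln Zc" by simp
    have "Qs z \<noteq> 0" using False Qs_zero_iff by simp
    then show ?thesis using False unfolding g_def
      by (simp only: if_False L) (simp add: field_simps)
  qed
  have "ereal (KL2 Qs (PX p) / 2) + bhat_dist_joint p Qs = ereal (- ln Zc / 2)"
  proof -
    have "KL2 Qs (PX p) / 2 + (\<Sum>z\<in>UNIV. g z) = (\<Sum>z\<in>UNIV. - Qs z * ln Zc / 2)"
      unfolding KL2_def sum_divide_distrib sum.distrib[symmetric] trm ..
    also have "\<dots> = - ln Zc / 2 * (\<Sum>z\<in>UNIV. Qs z)"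
      by (simp add: sum_distrib_left sum_divide_distrib sum_negf algebra_simps)
    also have "\<dots> = - ln Zc / 2" using Qs_simplex by (simp add: simplex2_def)
    finally show ?thesis unfolding bd by simp
  qed
  moreover have "psi2 p \<le> ereal (KL2 Qs (PX p) / 2) + bhat_dist_joint p Qs"
    unfolding psi2_def by (rule INF_lower[OF Qs_simplex])
  ultimately show ?thesis by simp
qed

end


definition nmoved :: "nat \<Rightarrow> (nat \<Rightarrow> nat) \<Rightarrow> nat" where
  "nmoved M \<sigma> = card {i\<in>{..<M}. \<sigma> i \<noteq> i}"

definition posmap :: "nat \<Rightarrow> nat \<Rightarrow> (nat \<Rightarrow> nat) \<Rightarrow> nat \<Rightarrow> nat" where
  "posmap M L \<sigma> k = (if k < M * L then \<sigma> (k div L) * L + k mod L else k)"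

lemma qLr_less: "q < M \<Longrightarrow> r < L \<Longrightarrow> q * L + r < M * (L::nat)"
proof -
  assume "q < M" "r < L"
  then have "q * L + r < q * L + L" by simp
  also have "\<dots> = (q + 1) * L" by simp
  also have "\<dots> \<le> M * L" using \<open>q < M\<close> by (intro mult_right_mono) auto
  finally show ?thesis .
qed

lemma qLr_inj: "r < L \<Longrightarrow> r' < L \<Longrightarrow> q * L + r = q' * L + (r'::nat) \<Longrightarrow> q = q' \<and> r = r'"
proof -
  assume a: "r < L" "r' < L" "q * L + r = q' * L + r'"
  have "q = (q * L + r) div L" using a(1) by simp
  also have "\<dots> = (q' * L + r') div L" using a(3) by simp
  also have "\<dots> = q'" using a(2) by simp
  finally have 1: "q = q'" .
  have "r = (q * L + r) mod L" using a(1) by simp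
  also have "\<dots> = (q' * L + r') mod L" using a(3) by simp
  also have "\<dots> = r'" using a(2) by simp
  finally show ?thesis using 1 by simp
qed

lemma posmap_permutes:
  assumes s: "\<sigma> permutes {..<M}"
  shows "posmap M L \<sigma> permutes {..<M * L}"
proof (rule bij_imp_permutes)
  let ?f = "posmap M L \<sigma>"
  have L0: "k < M * L \<Longrightarrow> 0 < L" for k by (cases L) auto
  have dl: "k < M * L \<Longrightarrow> k div L < M" for k
    using L0[of k] by (simp add: less_mult_imp_div_less mult.commute div_less_iff_less_mult)
  have sub: "?f ` {..<M * L} \<subseteq> {..<M * L}"
  proof
    fix y assume "y \<in> ?f ` {..<M * L}"
    then obtain k where k: "k < M * L" "y = ?f k" by auto
    have "\<sigma> (k div L) < M" using dl[OF k(1)] s by (metis lessThan_iff permutes_in_image)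
    moreover have "k mod L < L" using L0[OF k(1)] by simp
    ultimately show "y \<in> {..<M * L}" using k by (simp add: posmap_def qLr_less)
  qed
  have inj: "inj_on ?f {..<M * L}"
  proof (rule inj_onI)
    fix k k' assume k: "k \<in> {..<M * L}" "k' \<in> {..<M * L}" "?f k = ?f k'"
    then have "\<sigma> (k div L) * L + k mod L = \<sigma> (k' div L) * L + k' mod L"
      by (simp add: posmap_def)
    moreover have "k mod L < L" "k' mod L < L" using L0 k by auto
    ultimately have "\<sigma> (k div L) = \<sigma> (k' div L)" "k mod L = k' mod L"
      using qLr_inj by blast+
    then have "k div L = k' div L" "k mod L = k' mod L"
      using permutes_inj[OF s] by (auto dest: injD)
    then show "k = k'" by (metis div_mult_mod_eq)
  qed
  show "bij_betw ?f {..<M * L} {..<M * L}"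
    unfolding bij_betw_def using inj sub endo_inj_surj[of "{..<M * L}" ?f] by auto
  show "\<And>x. x \<notin> {..<M * L} \<Longrightarrow> ?f x = x" by (simp add: posmap_def)
qed

lemma rearr_eq: "k < M * L \<Longrightarrow> rearr M L \<sigma> xs k = xs (posmap M L \<sigma> k)"
  by (simp add: rearr_def posmap_def)

lemma moved_card:
  assumes s: "\<sigma> permutes {..<M}"
  shows "L * nmoved M \<sigma> \<le> card {k\<in>{..<M * L}. posmap M L \<sigma> k \<noteq> k}"
proof -
  let ?D = "{i\<in>{..<M}. \<sigma> i \<noteq> i} \<times> {..<L}"
  let ?g = "\<lambda>(q, r). q * L + r"
  have "card ?D \<le> card {k\<in>{..<M * L}. posmap M L \<sigma> k \<noteq> k}"
  proof (rule card_inj_on_le)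
    show "inj_on ?g ?D" by (rule inj_onI) (auto dest: qLr_inj)
    show "?g ` ?D \<subseteq> {k\<in>{..<M * L}. posmap M L \<sigma> k \<noteq> k}"
    proof
      fix y assume "y \<in> ?g ` ?D"
      then obtain q r where qr: "q < M" "\<sigma> q \<noteq> q" "r < L" "y = q * L + r" by auto
      have yl: "y < M * L" using qr by (simp add: qLr_less)
      have "y div L = q" "y mod L = r" using qr by auto
      then have "posmap M L \<sigma> y = \<sigma> q * L + r" using yl by (simp add: posmap_def)
      moreover have "\<sigma> q * L + r \<noteq> q * L + r" using qr qLr_inj by blast
      ultimately show "y \<in> {k\<in>{..<M * L}. posmap M L \<sigma> k \<noteq> k}" using yl qr by simp
    qed
    show "finite {k\<in>{..<M * L}. posmap M L \<sigma> k \<noteq> k}" by simp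
  qed
  then show ?thesis by (simp add: nmoved_def card_cartesian_product mult.commute)
qed

lemma prob_union:
  fixes p :: "'x::finite \<Rightarrow> 'y::finite \<Rightarrow> real" and E :: "(nat \<Rightarrow> 'x) \<Rightarrow> (nat \<Rightarrow> 'y) \<Rightarrow> bool"
  assumes "finite S" "\<forall>x y. 0 \<le> p x y"
    and "\<And>xs ys. xs \<in> seqs N \<Longrightarrow> ys \<in> seqs N \<Longrightarrow> E xs ys \<Longrightarrow> \<exists>\<sigma>\<in>S. F \<sigma> xs ys"
  shows "prob_iid p N E \<le> (\<Sum>\<sigma>\<in>S. prob_iid p N (F \<sigma>))"
proof -
  have w: "0 \<le> (\<Prod>k<N. p (xs k) (ys k))" for xs :: "nat \<Rightarrow> 'x" and ys :: "nat \<Rightarrow> 'y" using assms(2) by (simp add: prod_nonneg)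
  have "(\<Sum>\<sigma>\<in>S. prob_iid p N (F \<sigma>)) = (\<Sum>xs\<in>seqs N. \<Sum>ys\<in>seqs N. \<Sum>\<sigma>\<in>S.
      if F \<sigma> xs ys then (\<Prod>k<N. p (xs k) (ys k)) else 0)"
    unfolding prob_iid_def by (subst sum.swap) (simp add: sum.swap[of _ S])
  moreover have "prob_iid p N E \<le> \<dots>"
    unfolding prob_iid_def
  proof (intro sum_mono)
    fix xs :: "nat \<Rightarrow> 'x" and ys :: "nat \<Rightarrow> 'y" assume xy: "xs \<in> seqs N" "ys \<in> seqs N"
    show "(if E xs ys then \<Prod>k<N. p (xs k) (ys k) else 0)
        \<le> (\<Sum>\<sigma>\<in>S. if F \<sigma> xs ys then \<Prod>k<N. p (xs k) (ys k) else 0)"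
    proof (cases "E xs ys")
      case True
      then obtain \<sigma> where "\<sigma> \<in> S" "F \<sigma> xs ys" using assms(3) xy by blast
      then have "(if F \<sigma> xs ys then \<Prod>k<N. p (xs k) (ys k) else 0)
          \<le> (\<Sum>\<sigma>\<in>S. if F \<sigma> xs ys then \<Prod>k<N. p (xs k) (ys k) else 0)"
        using w assms(1) by (intro member_le_sum) auto
      then show ?thesis using True \<open>F \<sigma> xs ys\<close> by simp
    next
      case False then show ?thesis using w by (simp add: sum_nonneg)
    qed
  qed
  ultimately show ?thesis by simp
qed

lemma count_perm:
  "card {\<sigma>. \<sigma> permutes {..<M} \<and> nmoved M \<sigma> = k} \<le> M ^ k"
proof -
  let ?T = "{T. T \<subseteq> {..<M} \<and> card T = k}"
  have sub: "{\<sigma>. \<sigma> permutes {..<M} \<and> nmoved M \<sigma> = k} \<subseteq> (\<Union>T\<in>?T. {\<sigma>. \<sigma> permutes T})"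
  proof
    fix \<sigma> assume "\<sigma> \<in> {\<sigma>. \<sigma> permutes {..<M} \<and> nmoved M \<sigma> = k}"
    then have s: "\<sigma> permutes {..<M}" "nmoved M \<sigma> = k" by auto
    let ?S = "{i\<in>{..<M}. \<sigma> i \<noteq> i}"
    have "\<sigma> permutes ?S"
      using s(1) unfolding permutes_def by auto
    moreover have "?S \<in> ?T" using s(2) by (auto simp: nmoved_def)
    ultimately show "\<sigma> \<in> (\<Union>T\<in>?T. {\<sigma>. \<sigma> permutes T})" by blast
  qed
  have fin: "finite ?T" by simp
  have "card {\<sigma>. \<sigma> permutes {..<M} \<and> nmoved M \<sigma> = k} \<le> card (\<Union>T\<in>?T. {\<sigma>. \<sigma> permutes T})"
  proof (rule card_mono[OF _ sub])
    show "finite (\<Union>T\<in>?T. {\<sigma>. \<sigma> permutes T})"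
      by (rule finite_subset[OF _ finite_permutations[of "{..<M}"]]) (auto intro: permutes_subset)
  qed
  also have "\<dots> \<le> (\<Sum>T\<in>?T. card {\<sigma>. \<sigma> permutes T})" by (rule card_UN_le[OF fin])
  also have "\<dots> = (\<Sum>T\<in>?T. fact k)"
  proof (rule sum.cong[OF refl])
    fix T assume "T \<in> ?T"
    then have "finite T" "card T = k" using finite_subset[of T "{..<M}"] by auto
    then show "card {\<sigma>. \<sigma> permutes T} = fact k" by (simp add: card_permutations)
  qed
  also have "\<dots> = (M choose k) * fact k" using n_subsets[of "{..<M}" k] by simp
  also have "\<dots> \<le> M ^ k"
  proof (cases "k \<le> M")
    case True
    have "fact k * fact (M - k) * (M choose k) = (fact M :: nat)" by (rule binomial_fact_lemma[OF True])
    then have "(M choose k) * fact k = fact M div fact (M - k)"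
      by (metis fact_nonzero mult.commute nonzero_mult_div_cancel_left mult.assoc)
    then show ?thesis using fact_div_fact_le_pow[OF True] by simp
  next
    case False then have z: "M choose k = 0" using binomial_eq_0[of M k] by simp
    show ?thesis by (simp only: z mult_zero_left zero_le)
  qed
  finally show ?thesis .
qed

lemma geom_bound:
  fixes q :: real
  assumes "0 \<le> q" "q \<le> 1/2"
  shows "(\<Sum>k\<in>{K..M}. q ^ k) \<le> 2 * q ^ K"
proof -
  have gen: "(\<Sum>k\<in>{K..<K+n}. q ^ k) \<le> 2 * q ^ K - 2 * q ^ (K + n)" for n
  proof (induction n)
    case 0 then show ?case by simp
  next
    case (Suc n)
    have "(\<Sum>k\<in>{K..<K + Suc n}. q ^ k) = (\<Sum>k\<in>{K..<K+n}. q ^ k) + q ^ (K + n)" by simp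
    also have "\<dots> \<le> 2 * q ^ K - 2 * q ^ (K + n) + q ^ (K + n)" using Suc by simp
    also have "\<dots> \<le> 2 * q ^ K - 2 * q ^ (K + Suc n)"
    proof -
      have "q ^ (K + Suc n) = q * q ^ (K + n)" by simp
      moreover have "q * q ^ (K + n) \<le> 1/2 * q ^ (K + n)"
        using assms by (intro mult_right_mono) auto
      ultimately show ?thesis by simp
    qed
    finally show ?case .
  qed
  have "(\<Sum>k\<in>{K..M}. q ^ k) \<le> (\<Sum>k\<in>{K..<K+(M+1)}. q ^ k)"
    using assms by (intro sum_mono2) auto
  also have "\<dots> \<le> 2 * q ^ K" using gen[of "M+1"] zero_le_power[OF assms(1), of "K+(M+1)"] by linarith
  finally show ?thesis .
qed

lemma regroup:
  fixes x :: real
  assumes "0 \<le> x"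
  shows "(\<Sum>\<sigma>\<in>{\<sigma>. \<sigma> permutes {..<M} \<and> K \<le> nmoved M \<sigma>}. x ^ nmoved M \<sigma>)
     \<le> (\<Sum>k\<in>{K..M}. (real M * x) ^ k)"
proof -
  let ?S = "{\<sigma>. \<sigma> permutes {..<M} \<and> K \<le> nmoved M \<sigma>}"
  have finS: "finite ?S"
    by (rule finite_subset[OF _ finite_permutations[of "{..<M}"]]) auto
  have img: "nmoved M ` ?S \<subseteq> {K..M}"
  proof
    fix k assume "k \<in> nmoved M ` ?S"
    then obtain \<sigma> where "\<sigma> \<in> ?S" "k = nmoved M \<sigma>" by auto
    moreover have "nmoved M \<sigma> \<le> M"
    proof -
      have "card {i\<in>{..<M}. \<sigma> i \<noteq> i} \<le> card {..<M}" by (rule card_mono) auto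
      then show ?thesis by (simp add: nmoved_def)
    qed
    ultimately show "k \<in> {K..M}" by auto
  qed
  have "(\<Sum>\<sigma>\<in>?S. x ^ nmoved M \<sigma>) = (\<Sum>k\<in>{K..M}. \<Sum>\<sigma>\<in>{\<sigma>\<in>?S. nmoved M \<sigma> = k}. x ^ nmoved M \<sigma>)"
    by (rule sum.group[symmetric, OF finS _ img]) simp
  also have "\<dots> \<le> (\<Sum>k\<in>{K..M}. (real M * x) ^ k)"
  proof (rule sum_mono)
    fix k assume k: "k \<in> {K..M}"
    have eqset: "{\<sigma>\<in>?S. nmoved M \<sigma> = k} = {\<sigma>. \<sigma> permutes {..<M} \<and> nmoved M \<sigma> = k}"
      using k by auto
    have "(\<Sum>\<sigma>\<in>{\<sigma>. \<sigma> permutes {..<M} \<and> nmoved M \<sigma> = k}. x ^ nmoved M \<sigma>)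
        = real (card {\<sigma>. \<sigma> permutes {..<M} \<and> nmoved M \<sigma> = k}) * x ^ k"
      by simp
    also have "\<dots> \<le> real (M ^ k) * x ^ k"
      using count_perm[of M k] assms by (intro mult_right_mono) auto
    also have "\<dots> = (real M * x) ^ k" by (simp add: power_mult_distrib)
    finally show "(\<Sum>\<sigma>\<in>{\<sigma>\<in>?S. nmoved M \<sigma> = k}. x ^ nmoved M \<sigma>) \<le> (real M * x) ^ k"
      unfolding eqset .
  qed
  finally show ?thesis .
qed



context jp begin

definition Am :: "'x \<Rightarrow> 'x \<Rightarrow> real" where
  "Am u v = sqrt (PX p u) * bhat_coeff p u v * sqrt (PX p v)"

lemma Am_nonneg: "0 \<le> Am u v"
  unfolding Am_def using P_pos B_nonneg by (simp add: less_imp_le)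

lemma sqP: "sqrt (PX p u) * sqrt (PX p u) = PX p u"
  using P_pos[of u] by simp

lemma trc_Am: "trc Am = 1"
  unfolding trc_def Am_def using P_sum by (simp add: B_diag abs_of_pos[OF P_pos])

lemma frob_Am: "frob Am = sqrt Zc"
proof -
  have "(Am u v)\<^sup>2 = PX p u * PX p v * (bhat_coeff p u v)\<^sup>2" for u v
    using P_pos[of u] P_pos[of v] by (simp add: Am_def power_mult_distrib less_imp_le)
  then show ?thesis unfolding frob_def Zc_def by simp
qed

lemma single_bound:
  assumes s: "\<sigma> permutes {..<M}" and r1: "sqrt Zc \<le> 1"
  shows "prob_iid p (M * L) (\<lambda>xs ys. likelihood p (M * L) xs ys \<le> likelihood p (M * L) (rearr M L \<sigma> xs) ys)
     \<le> sqrt Zc ^ (L * nmoved M \<sigma>)"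
proof -
  define N where "N = M * L"
  define \<pi> where "\<pi> = posmap M L \<sigma>"
  have perm: "\<pi> permutes {..<N}" unfolding \<pi>_def N_def by (rule posmap_permutes[OF s])
  have lik_r: "likelihood p N (rearr M L \<sigma> xs) ys = (\<Prod>k<N. chan p (xs (\<pi> k)) (ys k))" for xs ys
    unfolding likelihood_def by (intro prod.cong refl) (simp add: rearr_eq N_def \<pi>_def)
  have "prob_iid p N (\<lambda>xs ys. likelihood p N xs ys \<le> likelihood p N (rearr M L \<sigma> xs) ys)
      \<le> (\<Sum>xs\<in>seqs N. \<Sum>ys\<in>seqs N. (\<Prod>k<N. PX p (xs k)) *
            (\<Prod>k<N. sqrt (chan p (xs (\<pi> k)) (ys k) * chan p (xs k) (ys k))))"
    unfolding prob_iid_def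
  proof (intro sum_mono)
    fix xs :: "nat \<Rightarrow> 'x" and ys :: "nat \<Rightarrow> 'y"
    define a where "a = (\<Prod>k<N. chan p (xs k) (ys k))"
    define b where "b = (\<Prod>k<N. chan p (xs (\<pi> k)) (ys k))"
    have a0: "0 \<le> a" unfolding a_def by (simp add: prod_nonneg W_nonneg)
    have b0: "0 \<le> b" unfolding b_def by (simp add: prod_nonneg W_nonneg)
    have P0: "0 \<le> (\<Prod>k<N. PX p (xs k))" by (simp add: prod_nonneg less_imp_le[OF P_pos])
    have pe: "(\<Prod>k<N. p (xs k) (ys k)) = (\<Prod>k<N. PX p (xs k)) * a"
      unfolding a_def by (simp add: p_eq prod.distrib)
    have se: "(\<Prod>k<N. sqrt (chan p (xs (\<pi> k)) (ys k) * chan p (xs k) (ys k))) = sqrt (b * a)"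
      unfolding a_def b_def by (simp only: prod.distrib[symmetric] sqrt_prod)
    have "a \<le> b \<Longrightarrow> a \<le> sqrt (b * a)"
    proof -
      assume "a \<le> b"
      then have "a * a \<le> b * a" using a0 by (simp add: mult_right_mono)
      then have "sqrt (a * a) \<le> sqrt (b * a)" by (rule real_sqrt_le_mono)
      then show ?thesis using a0 by simp
    qed
    then show "(if likelihood p N xs ys \<le> likelihood p N (rearr M L \<sigma> xs) ys then \<Prod>k<N. p (xs k) (ys k) else 0)
        \<le> (\<Prod>k<N. PX p (xs k)) * (\<Prod>k<N. sqrt (chan p (xs (\<pi> k)) (ys k) * chan p (xs k) (ys k)))"
      unfolding lik_r se pe using P0 a0 b0
      by (auto simp: likelihood_def a_def[symmetric] b_def[symmetric] intro!: mult_left_mono)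
  qed
  also have "\<dots> = (\<Sum>xs\<in>seqs N. (\<Prod>k<N. PX p (xs k)) * (\<Prod>k<N. bhat_coeff p (xs (\<pi> k)) (xs k)))"
  proof (intro sum.cong refl)
    fix xs :: "nat \<Rightarrow> 'x"
    have "(\<Sum>ys\<in>seqs N. \<Prod>k<N. sqrt (chan p (xs (\<pi> k)) (ys k) * chan p (xs k) (ys k)))
        = (\<Prod>k<N. \<Sum>y\<in>UNIV. sqrt (chan p (xs (\<pi> k)) y * chan p (xs k) y))"
      unfolding seqs_def by (rule prod_sum_PiE[symmetric]) auto
    then show "(\<Sum>ys\<in>seqs N. (\<Prod>k<N. PX p (xs k)) *
            (\<Prod>k<N. sqrt (chan p (xs (\<pi> k)) (ys k) * chan p (xs k) (ys k))))
        = (\<Prod>k<N. PX p (xs k)) * (\<Prod>k<N. bhat_coeff p (xs (\<pi> k)) (xs k))"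
      by (simp add: sum_distrib_left[symmetric] bhat_coeff_def)
  qed
  also have "\<dots> = (\<Sum>xs\<in>seqs N. \<Prod>k<N. Am (xs (\<pi> k)) (xs k))"
  proof (intro sum.cong refl)
    fix xs :: "nat \<Rightarrow> 'x"
    have "(\<Prod>k<N. Am (xs (\<pi> k)) (xs k)) = (\<Prod>k<N. sqrt (PX p (xs (\<pi> k)))) *
        (\<Prod>k<N. bhat_coeff p (xs (\<pi> k)) (xs k)) * (\<Prod>k<N. sqrt (PX p (xs k)))"
      unfolding Am_def by (simp add: prod.distrib)
    also have "(\<Prod>k<N. sqrt (PX p (xs (\<pi> k)))) = (\<Prod>k<N. sqrt (PX p (xs k)))"
      using prod.permute[OF perm, of "\<lambda>k. sqrt (PX p (xs k))"] by (simp add: comp_def)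
    also have "(\<Prod>k<N. sqrt (PX p (xs k))) * (\<Prod>k<N. bhat_coeff p (xs (\<pi> k)) (xs k)) * (\<Prod>k<N. sqrt (PX p (xs k)))
        = (\<Prod>k<N. sqrt (PX p (xs k)) * sqrt (PX p (xs k))) * (\<Prod>k<N. bhat_coeff p (xs (\<pi> k)) (xs k))"
      by (simp only: prod.distrib mult_ac)
    also have "\<dots> = (\<Prod>k<N. PX p (xs k)) * (\<Prod>k<N. bhat_coeff p (xs (\<pi> k)) (xs k))"
      by (simp only: sqP)
    finally show "(\<Prod>k<N. PX p (xs k)) * (\<Prod>k<N. bhat_coeff p (xs (\<pi> k)) (xs k)) = (\<Prod>k<N. Am (xs (\<pi> k)) (xs k))"
      by simp
  qed
  also have "\<dots> = Tsum {..<N} \<pi> (\<lambda>_. Am)"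
    unfolding Tsum_def seqs_def by simp
  also have "\<dots> \<le> (\<Prod>k\<in>{..<N}. if \<pi> k = k then trc Am else frob Am)"
    using Tsum_le[OF _ perm, of "\<lambda>_. Am"] Am_nonneg by simp
  also have "\<dots> = (\<Prod>k\<in>{..<N}. if \<pi> k = k then 1 else sqrt Zc)"
    using trc_Am frob_Am by (intro prod.cong refl) auto
  also have "\<dots> = sqrt Zc ^ card {k\<in>{..<N}. \<pi> k \<noteq> k}"
  proof -
    have "(\<Prod>k\<in>{..<N}. if \<pi> k = k then 1 else sqrt Zc) = (\<Prod>k\<in>{k\<in>{..<N}. \<pi> k \<noteq> k}. sqrt Zc)"
      by (subst prod.inter_filter) (auto intro!: prod.cong)
    then show ?thesis by simp
  qed
  also have "\<dots> \<le> sqrt Zc ^ (L * nmoved M \<sigma>)"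
    using moved_card[OF s, of L] r1 less_imp_le[OF Zc_pos] unfolding N_def \<pi>_def
    by (intro power_decreasing) auto
  finally show ?thesis unfolding N_def .
qed

end


lemma rearr_id: "k < M * L \<Longrightarrow> rearr M L id xs k = xs k"
  by (simp add: rearr_def)

lemma nmoved_ge2:
  assumes s: "\<sigma> permutes {..<M}" and i: "i < M" "\<sigma> i \<noteq> i"
  shows "2 \<le> nmoved M \<sigma>"
proof -
  have si: "\<sigma> i < M" using s i by (metis lessThan_iff permutes_in_image)
  have "\<sigma> (\<sigma> i) \<noteq> \<sigma> i" using i permutes_inj[OF s] by (metis injD)
  then have "{i, \<sigma> i} \<subseteq> {i\<in>{..<M}. \<sigma> i \<noteq> i}" using i si by auto
  then have "card {i, \<sigma> i} \<le> nmoved M \<sigma>" unfolding nmoved_def by (intro card_mono) auto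
  then show ?thesis using i by simp
qed

lemma rearr_fixed:
  assumes "i < M" "j < L" "\<sigma> i = i"
  shows "rearr M L \<sigma> xs (i * L + j) = xs (i * L + j)"
proof -
  have "i * L + j < M * L" using assms by (simp add: qLr_less)
  moreover have "(i * L + j) div L = i" "(i * L + j) mod L = j" using assms by auto
  ultimately show ?thesis using assms by (simp add: rearr_def)
qed

lemma K_zero:
  assumes s: "\<sigma> permutes {..<M}" and ne: "\<exists>k<M * L. rearr M L \<sigma> xs k \<noteq> xs k"
  shows "2 \<le> nmoved M \<sigma>"
proof -
  obtain k where k: "k < M * L" "rearr M L \<sigma> xs k \<noteq> xs k" using ne by blast
  have L0: "0 < L" using k by (cases L) auto
  have kd: "k div L < M" using k L0 by (simp add: div_less_iff_less_mult)
  have "\<sigma> (k div L) \<noteq> k div L"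
  proof
    assume "\<sigma> (k div L) = k div L"
    then have "rearr M L \<sigma> xs ((k div L) * L + k mod L) = xs ((k div L) * L + k mod L)"
      using kd L0 by (intro rearr_fixed) auto
    then show False using k by simp
  qed
  then show ?thesis using nmoved_ge2[OF s kd] by simp
qed

lemma K_xi:
  assumes s: "\<sigma> permutes {..<M}" and M0: "0 < M" and xi: "\<xi> \<le> Xi M L xs (rearr M L \<sigma> xs)"
  shows "nat \<lceil>\<xi> * real M\<rceil> \<le> nmoved M \<sigma>"
proof -
  let ?D = "{i\<in>{..<M}. \<exists>j<L. rearr M L \<sigma> xs (i * L + j) \<noteq> xs (i * L + j)}"
  have "Xi M L xs (rearr M L \<sigma> xs) = real (card ?D) / real M"
    unfolding Xi_def by (simp add: sum.inter_filter[symmetric])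
  then have "\<xi> * real M \<le> real (card ?D)" using xi M0 by (simp add: pos_le_divide_eq)
  moreover have "?D \<subseteq> {i\<in>{..<M}. \<sigma> i \<noteq> i}" using rearr_fixed by blast
  then have "card ?D \<le> nmoved M \<sigma>" unfolding nmoved_def by (intro card_mono) auto
  ultimately have "\<xi> * real M \<le> real (nmoved M \<sigma>)" by linarith
  then show ?thesis by (simp add: nat_le_iff ceiling_le_iff)
qed

context jp begin

lemma FP_bound:
  fixes dec :: "nat \<Rightarrow> (nat \<Rightarrow> 'x) \<Rightarrow> (nat \<Rightarrow> 'y) \<Rightarrow> (nat \<Rightarrow> 'x)"
  assumes ml: "\<forall>xs ys. xs \<in> seqs (M * frag_len \<beta> M) \<and> ys \<in> seqs (M * frag_len \<beta> M) \<longrightarrow>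
               is_ML p M (frag_len \<beta> M) xs ys (dec M xs ys)"
    and r1: "sqrt Zc \<le> 1"
    and KK: "\<And>\<sigma> (xs :: nat \<Rightarrow> 'x). \<sigma> permutes {..<M} \<Longrightarrow> \<xi> \<le> Xi M (frag_len \<beta> M) xs (rearr M (frag_len \<beta> M) \<sigma> xs) \<Longrightarrow>
               (\<exists>k<M * frag_len \<beta> M. rearr M (frag_len \<beta> M) \<sigma> xs k \<noteq> xs k) \<Longrightarrow> K \<le> nmoved M \<sigma>"
  shows "FP p \<beta> dec M \<xi> \<le> (\<Sum>k\<in>{K..M}. (real M * sqrt Zc ^ frag_len \<beta> M) ^ k)"
proof -
  define L where "L = frag_len \<beta> M"
  define N where "N = M * L"
  define S where "S = {\<sigma>. \<sigma> permutes {..<M} \<and> K \<le> nmoved M \<sigma>}"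
  have finS: "finite S" unfolding S_def
    by (rule finite_subset[OF _ finite_permutations[of "{..<M}"]]) auto
  have "FP p \<beta> dec M \<xi> = prob_iid p N (\<lambda>xs ys. \<xi> \<le> Xi M L xs (dec M xs ys) \<and> (\<exists>k<N. dec M xs ys k \<noteq> xs k))"
    unfolding FP_def L_def N_def Let_def ..
  also have "\<dots> \<le> (\<Sum>\<sigma>\<in>S. prob_iid p N (\<lambda>xs ys. likelihood p N xs ys \<le> likelihood p N (rearr M L \<sigma> xs) ys))"
  proof (rule prob_union[OF finS])
    show "\<forall>x y. 0 \<le> p x y" using p_nonneg by simp
    fix xs :: "nat \<Rightarrow> 'x" and ys :: "nat \<Rightarrow> 'y" assume xy: "xs \<in> seqs N" "ys \<in> seqs N"
      and E: "\<xi> \<le> Xi M L xs (dec M xs ys) \<and> (\<exists>k<N. dec M xs ys k \<noteq> xs k)"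
    have isml: "is_ML p M L xs ys (dec M xs ys)" using ml xy unfolding L_def N_def by blast
    then obtain \<sigma> where s: "\<sigma> permutes {..<M}" and dx: "dec M xs ys = rearr M L \<sigma> xs"
      unfolding is_ML_def recon_set_def by blast
    have "rearr M L id xs \<in> recon_set M L xs" unfolding recon_set_def using permutes_id by blast
    then have "likelihood p N (rearr M L id xs) ys \<le> likelihood p N (dec M xs ys) ys"
      using isml unfolding is_ML_def N_def by blast
    moreover have "likelihood p N (rearr M L id xs) ys = likelihood p N xs ys"
      unfolding likelihood_def N_def by (intro prod.cong refl) (simp add: rearr_id)
    ultimately have "likelihood p N xs ys \<le> likelihood p N (rearr M L \<sigma> xs) ys" using dx by simp
    moreover have "K \<le> nmoved M \<sigma>" using KK[OF s] E unfolding dx L_def N_def by blast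
    ultimately show "\<exists>\<sigma>\<in>S. likelihood p N xs ys \<le> likelihood p N (rearr M L \<sigma> xs) ys"
      using s unfolding S_def by blast
  qed
  also have "\<dots> \<le> (\<Sum>\<sigma>\<in>S. (sqrt Zc ^ L) ^ nmoved M \<sigma>)"
    unfolding N_def power_mult[symmetric] S_def by (intro sum_mono single_bound r1) simp
  also have "\<dots> \<le> (\<Sum>k\<in>{K..M}. (real M * sqrt Zc ^ L) ^ k)"
    unfolding S_def by (rule regroup) (simp add: less_imp_le[OF Zc_pos])
  finally show ?thesis unfolding L_def .
qed

end

theorem theorem1:
  fixes p :: "'x::finite \<Rightarrow> 'y::finite \<Rightarrow> real"
    and \<beta> :: real
    and dec :: "nat \<Rightarrow> (nat \<Rightarrow> 'x) \<Rightarrow> (nat \<Rightarrow> 'y) \<Rightarrow> (nat \<Rightarrow> 'x)"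
  assumes pmf: "is_joint_pmf p"
    and full_support: "\<forall>x. PX p x > 0"
    and beta_pos: "\<beta> > 0"
    and beta_large: "ereal \<beta> * psi2 p > 1"
    and ml_decoder: "\<forall>M xs ys. xs \<in> seqs (M * frag_len \<beta> M) \<and> ys \<in> seqs (M * frag_len \<beta> M) \<longrightarrow>
               is_ML p M (frag_len \<beta> M) xs ys (dec M xs ys)"
  shows "(\<exists>C M0. \<forall>M\<ge>M0.
            FP p \<beta> dec M 0 \<le> C * real M powr (2 * (1 - \<beta> * real_of_ereal (psi2 p))))
       \<and> (\<forall>\<xi>. 0 < \<xi> \<and> \<xi> < 1 \<longrightarrow> (\<exists>C M0. \<forall>M\<ge>M0.
            FP p \<beta> dec M \<xi> \<le>
              exp (- (real M * ln (real M) * \<xi> *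
                      (\<beta> * real_of_ereal (psi2 p) - 1 - C / real M)))))"
proof -
  interpret jp p using pmf full_support by unfold_locales
  define \<psi> where "\<psi> = real_of_ereal (psi2 p)"
  have psi_eq: "psi2 p = ereal \<psi>" and bpsi: "\<beta> * \<psi> > 1"
  proof -
    have "psi2 p = ereal \<psi> \<and> \<beta> * \<psi> > 1"
    proof (cases "psi2 p" rule: ereal_cases)
      case (real r) then show ?thesis using beta_large by (simp add: \<psi>_def)
    next
      case PInf then show ?thesis using psi2_le by simp
    next
      case MInf then show ?thesis using beta_large beta_pos by simp
    qed
    then show "psi2 p = ereal \<psi>" "\<beta> * \<psi> > 1" by auto
  qed
  have psi_pos: "0 < \<psi>"
  proof (rule ccontr)
    assume "\<not> 0 < \<psi>"
    then have "\<beta> * \<psi> \<le> 0" using beta_pos by (simp add: mult_nonneg_nonpos)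
    then show False using bpsi by simp
  qed
  have "\<psi> \<le> - ln Zc / 2" using psi2_le psi_eq by simp
  then have lz: "ln Zc \<le> - 2 * \<psi>" by simp
  have "Zc = exp (ln Zc)" using Zc_pos by simp
  also have "\<dots> \<le> exp (- 2 * \<psi>)" using lz by simp
  also have "exp (- 2 * \<psi>) = (exp (- \<psi>))\<^sup>2" by (simp add: power2_eq_square exp_add[symmetric])
  finally have "Zc \<le> (exp (- \<psi>))\<^sup>2" .
  then have rle: "sqrt Zc \<le> exp (- \<psi>)" by (simp add: real_le_lsqrt)
  have "exp (- \<psi>) \<le> 1" using psi_pos by simp
  then have r1: "sqrt Zc \<le> 1" using rle by linarith
  have r0: "0 \<le> sqrt Zc" using Zc_pos by simp
  define a where "a = \<beta> * \<psi> - 1"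
  have a_pos: "0 < a" using bpsi a_def by simp
  define M0 :: nat where "M0 = nat \<lceil>2 powr (1 / a)\<rceil> + 2"
  define q where "q M = real M * sqrt Zc ^ frag_len \<beta> M" for M
  have qbound: "0 \<le> q M \<and> q M \<le> real M powr (- a) \<and> real M powr (- a) \<le> 1/2" if M: "M \<ge> M0" for M
  proof -
    have M2: "real M \<ge> 2" using M unfolding M0_def by linarith
    have Mp: "real M \<ge> 2 powr (1 / a)" using M unfolding M0_def by linarith
    have lnM: "0 < ln (real M)" using M2 by simp
    have Lge: "\<beta> * ln (real M) \<le> real (frag_len \<beta> M)"
      unfolding frag_len_def using beta_pos lnM by linarith
    have "sqrt Zc ^ frag_len \<beta> M \<le> exp (- \<psi>) ^ frag_len \<beta> M"
      using rle r0 by (intro power_mono) auto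
    also have "\<dots> = exp (- \<psi> * real (frag_len \<beta> M))" by (simp add: exp_of_nat_mult[symmetric] mult.commute)
    also have "\<dots> \<le> exp (- \<psi> * (\<beta> * ln (real M)))"
      using Lge psi_pos by simp
    finally have "q M \<le> real M * exp (- \<psi> * (\<beta> * ln (real M)))"
      unfolding q_def using M2 by (intro mult_left_mono) auto
    also have "\<dots> = real M powr (- a)"
    proof -
      have "real M = exp (ln (real M))" using M2 by simp
      then have "real M * exp (- \<psi> * (\<beta> * ln (real M))) = exp (ln (real M) + - \<psi> * (\<beta> * ln (real M)))"
        by (metis exp_add)
      also have "\<dots> = exp (- a * ln (real M))" unfolding a_def by (simp add: algebra_simps)
      also have "\<dots> = real M powr (- a)" using M2 by (simp add: powr_def)
      finally show ?thesis .
    qed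
    finally have q1: "q M \<le> real M powr (- a)" .
    have "2 = (2 powr (1 / a)) powr a" using a_pos by (simp add: powr_powr)
    also have "\<dots> \<le> real M powr a" using Mp a_pos by (intro powr_mono2) auto
    finally have "2 \<le> real M powr a" .
    then have "real M powr (- a) \<le> 1/2" by (simp add: powr_minus divide_simps)
    moreover have "0 \<le> q M" unfolding q_def using r0 by simp
    ultimately show ?thesis using q1 by simp
  qed
  have part1: "\<exists>C M0. \<forall>M\<ge>M0. FP p \<beta> dec M 0 \<le> C * real M powr (2 * (1 - \<beta> * \<psi>))"
  proof (intro exI allI impI)
    fix M assume M: "M \<ge> M0"
    have "FP p \<beta> dec M 0 \<le> (\<Sum>k\<in>{2..M}. q M ^ k)"
      unfolding q_def
    proof (rule FP_bound[OF _ r1])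
      show "\<forall>xs ys. xs \<in> seqs (M * frag_len \<beta> M) \<and> ys \<in> seqs (M * frag_len \<beta> M) \<longrightarrow>
               is_ML p M (frag_len \<beta> M) xs ys (dec M xs ys)" using ml_decoder by blast
      fix \<sigma> xs assume "\<sigma> permutes {..<M}" "\<exists>k<M * frag_len \<beta> M. rearr M (frag_len \<beta> M) \<sigma> xs k \<noteq> xs k"
      then show "2 \<le> nmoved M \<sigma>" by (rule K_zero)
    qed
    also have "\<dots> \<le> 2 * q M ^ 2" using qbound[OF M] by (intro geom_bound) auto
    also have "\<dots> \<le> 2 * (real M powr (- a)) ^ 2" using qbound[OF M] by (intro mult_left_mono power_mono) auto
    also have "(real M powr (- a)) ^ 2 = real M powr (2 * (1 - \<beta> * \<psi>))"
      by (simp add: power2_eq_square powr_add[symmetric] a_def algebra_simps)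
    finally show "FP p \<beta> dec M 0 \<le> 2 * real M powr (2 * (1 - \<beta> * \<psi>))" .
  qed
  have part2: "\<exists>C M0. \<forall>M\<ge>M0. FP p \<beta> dec M \<xi> \<le>
      exp (- (real M * ln (real M) * \<xi> * (\<beta> * \<psi> - 1 - C / real M)))" if xi: "0 < \<xi>" "\<xi> < 1" for \<xi>
  proof (intro exI allI impI)
    fix M assume M: "M \<ge> M0"
    have M2: "real M \<ge> 2" using M unfolding M0_def by linarith
    define K where "K = nat \<lceil>\<xi> * real M\<rceil>"
    have "FP p \<beta> dec M \<xi> \<le> (\<Sum>k\<in>{K..M}. q M ^ k)"
      unfolding q_def
    proof (rule FP_bound[OF _ r1])
      show "\<forall>xs ys. xs \<in> seqs (M * frag_len \<beta> M) \<and> ys \<in> seqs (M * frag_len \<beta> M) \<longrightarrow>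
               is_ML p M (frag_len \<beta> M) xs ys (dec M xs ys)" using ml_decoder by blast
      fix \<sigma> xs assume "\<sigma> permutes {..<M}" "\<xi> \<le> Xi M (frag_len \<beta> M) xs (rearr M (frag_len \<beta> M) \<sigma> xs)"
      then show "K \<le> nmoved M \<sigma>" unfolding K_def using M2 by (intro K_xi) auto
    qed
    also have "\<dots> \<le> 2 * q M ^ K" using qbound[OF M] by (intro geom_bound) auto
    also have "\<dots> \<le> 2 * (real M powr (- a)) ^ K" using qbound[OF M] by (intro mult_left_mono power_mono) auto
    also have "(real M powr (- a)) ^ K = real M powr (- a * real K)"
      using M2 by (simp add: powr_realpow[symmetric] powr_powr)
    also have "real M powr (- a * real K) \<le> real M powr (- a * (\<xi> * real M))"
    proof (rule powr_mono)
      have "\<xi> * real M \<le> real K" unfolding K_def by linarith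
      then show "- a * real K \<le> - a * (\<xi> * real M)" using a_pos by simp
      show "1 \<le> real M" using M2 by simp
    qed
    also have "2 * real M powr (- a * (\<xi> * real M)) \<le> real M * real M powr (- a * (\<xi> * real M))"
      using M2 by (intro mult_right_mono) auto
    also have "\<dots> = exp (- (real M * ln (real M) * \<xi> * (\<beta> * \<psi> - 1 - (1 / \<xi>) / real M)))"
    proof -
      have "real M * real M powr (- a * (\<xi> * real M)) = exp (ln (real M)) * exp (- a * (\<xi> * real M) * ln (real M))"
        using M2 by (simp add: powr_def)
      also have "\<dots> = exp (ln (real M) + - a * (\<xi> * real M) * ln (real M))" by (rule exp_add[symmetric])
      also have "ln (real M) + - a * (\<xi> * real M) * ln (real M) = - (real M * ln (real M) * \<xi> * (\<beta> * \<psi> - 1 - (1 / \<xi>) / real M))"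
        using xi M2 unfolding a_def by (simp add: field_simps)
      finally show ?thesis .
    qed
    finally show "FP p \<beta> dec M \<xi> \<le> exp (- (real M * ln (real M) * \<xi> * (\<beta> * \<psi> - 1 - (1 / \<xi>) / real M)))"
      by simp
  qed
  show ?thesis using part1 part2 unfolding \<psi>_def by blast
qed


end
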